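(* Let $\mathcal{C}$ be a connected simply connected Cartan scheme whose real roots form a finite root system, let $a$ be an object, $\Gamma^a$ its Dynkin diagram, and $i\in I$. (1) For $i_1,\dots,i_k\in I$, the induced subdiagram on $\{i,i_1,\dots,i_k\}$ is connected in $\Gamma^a$ if and only if it is connected in $\Gamma^{\rho_i(a)}$. Let $j,k\in I$ with $|\{i,j,k\}|=3$. (2) If $i$ is connected neither to $j$ nor to $k$ (in $\Gamma^a$), then the connection between $j$ and $k$, including labels, is the same in $\Gamma^a$ and $\Gamma^{\rho_i(a)}$, i.e. $c^a_{jk}=c^{\rho_i(a)}_{jk}$ and $c^a_{kj}=c^{\rho_i(a)}_{kj}$. (3) If $i$ is connected to $j$ and not connected to $k$, then $j$ and $k$ are connected in $\Gamma^a$ if and only if they are connected in $\Gamma^{\rho_i(a)}$.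
   Context: Cartan scheme $\mathcal{C}=(I,A,(\rho_i),(C^a))$: $A$ non-empty, involutions $\rho_i:A\to A$, generalized Cartan matrices $C^a=(c^a_{ij})$ ($c_{ii}=2$, $c_{ij}\le 0$ for $i\ne j$, $c_{ij}=0\Leftrightarrow c_{ji}=0$) with $c^a_{ij}=c^{\rho_i(a)}_{ij}$. Weyl groupoid generated by $\sigma_i^a:a\to\rho_i(a)$, $\sigma^a_i(\alpha_j)=\alpha_j-c^a_{ij}\alpha_i$ on $\mathbb{Z}^I$. Connected: all $\mathrm{Hom}(a,b)\neq\emptyset$; simply connected: $\mathrm{Hom}(a,a)=\{\mathrm{id}\}$. Real roots $R^a=\{w(\alpha_j): w\in\mathrm{Hom}(b,a)\}$, $R^a_+=R^a\cap\mathbb{N}_0^I$; finite root system: all $R^a$ finite, $R^a=R^a_+\cup-R^a_+$, $(\rho_i\rho_j)^{m^a_{ij}}(a)=a$ whenever $i\ne j$ and $m^a_{ij}=|R^a\cap(\mathbb{N}_0\alpha_i+\mathbb{N}_0\alpha_j)|<\infty$. The Dynkin diagram $\Gamma^a$ has vertex set $I$; distinct $i,j$ are connected iff $c^a_{ij}\ne0$, by an arrow to $i$ labelled $-c^a_{ij}$. *)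

theory Defs
  imports Main
begin

text \<open>Cartan schemes with index set I = UNIV of a finite type 'i.\<close>

definition simple_root :: "'i \<Rightarrow> 'i \<Rightarrow> int" where
  "simple_root i = (\<lambda>k. if k = i then 1 else 0)"

definition cartan_scheme ::
  "'a set \<Rightarrow> ('i::finite \<Rightarrow> 'a \<Rightarrow> 'a) \<Rightarrow> ('a \<Rightarrow> 'i \<Rightarrow> 'i \<Rightarrow> int) \<Rightarrow> bool" where
  "cartan_scheme A rho C \<longleftrightarrow>
     A \<noteq> {} \<and>
     (\<forall>i. \<forall>a\<in>A. rho i a \<in> A \<and> rho i (rho i a) = a) \<and>
     (\<forall>a\<in>A. (\<forall>i. C a i i = 2) \<and>
             (\<forall>i j. i \<noteq> j \<longrightarrow> C a i j \<le> 0) \<and>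
             (\<forall>i j. C a i j = 0 \<longleftrightarrow> C a j i = 0)) \<and>
     (\<forall>a\<in>A. \<forall>i j. C a i j = C (rho i a) i j)"

text \<open>The generator sigma_i^a : a \<rightarrow> rho_i(a), the linear map with
  sigma_i^a(alpha_j) = alpha_j - c^a_ij alpha_i.\<close>
definition sigma :: "('a \<Rightarrow> 'i::finite \<Rightarrow> 'i \<Rightarrow> int) \<Rightarrow> 'a \<Rightarrow> 'i \<Rightarrow> ('i \<Rightarrow> int) \<Rightarrow> ('i \<Rightarrow> int)" where
  "sigma C a i v = (\<lambda>k. v k - (if k = i then (\<Sum>j\<in>UNIV. C a i j * v j) else 0))"

text \<open>weyl_mor A rho C a b f: f is (the linear map of) a morphism in Hom(a,b)
  of the Weyl groupoid, i.e. a composition of generators sigma.\<close>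
inductive weyl_mor ::
  "'a set \<Rightarrow> ('i::finite \<Rightarrow> 'a \<Rightarrow> 'a) \<Rightarrow> ('a \<Rightarrow> 'i \<Rightarrow> 'i \<Rightarrow> int) \<Rightarrow> 'a \<Rightarrow> 'a \<Rightarrow> (('i \<Rightarrow> int) \<Rightarrow> ('i \<Rightarrow> int)) \<Rightarrow> bool"
  for A rho C where
  mor_id: "a \<in> A \<Longrightarrow> weyl_mor A rho C a a id"
| mor_step: "weyl_mor A rho C a b f \<Longrightarrow> weyl_mor A rho C a (rho i b) (sigma C b i \<circ> f)"

definition ws_connected where
  "ws_connected A rho C \<longleftrightarrow> (\<forall>a\<in>A. \<forall>b\<in>A. \<exists>f. weyl_mor A rho C a b f)"

definition ws_simply_connected where
  "ws_simply_connected A rho C \<longleftrightarrow> (\<forall>a\<in>A. \<forall>f. weyl_mor A rho C a a f \<longrightarrow> f = id)"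

definition real_roots where
  "real_roots A rho C a = {f (simple_root j) | b f j. weyl_mor A rho C b a f}"

definition pos_real_roots where
  "pos_real_roots A rho C a = {v \<in> real_roots A rho C a. \<forall>k. v k \<ge> 0}"

definition m_ij where
  "m_ij A rho C a i j = card {v \<in> real_roots A rho C a.
      v i \<ge> 0 \<and> v j \<ge> 0 \<and> (\<forall>k. k \<noteq> i \<and> k \<noteq> j \<longrightarrow> v k = 0)}"

definition finite_root_system where
  "finite_root_system A rho C \<longleftrightarrow>
     (\<forall>a\<in>A. finite (real_roots A rho C a)) \<and>
     (\<forall>a\<in>A. real_roots A rho C a =
              pos_real_roots A rho C a \<union> uminus ` pos_real_roots A rho C a) \<and>
     (\<forall>a\<in>A. \<forall>i j. i \<noteq> j \<longrightarrow>
        finite {v \<in> real_roots A rho C a.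
          v i \<ge> 0 \<and> v j \<ge> 0 \<and> (\<forall>k. k \<noteq> i \<and> k \<noteq> j \<longrightarrow> v k = 0)} \<longrightarrow>
        ((rho i \<circ> rho j) ^^ m_ij A rho C a i j) a = a)"

definition dynkin_edge :: "('a \<Rightarrow> 'i \<Rightarrow> 'i \<Rightarrow> int) \<Rightarrow> 'a \<Rightarrow> 'i \<Rightarrow> 'i \<Rightarrow> bool" where
  "dynkin_edge C a i j \<longleftrightarrow> i \<noteq> j \<and> C a i j \<noteq> 0"

definition subdiagram_connected :: "('a \<Rightarrow> 'i \<Rightarrow> 'i \<Rightarrow> int) \<Rightarrow> 'a \<Rightarrow> 'i set \<Rightarrow> bool" where
  "subdiagram_connected C a S \<longleftrightarrow>
     (\<forall>x\<in>S. \<forall>y\<in>S. (x, y) \<in> {(u, v). u \<in> S \<and> v \<in> S \<and> dynkin_edge C a u v}\<^sup>*)"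

end

theory Submission
  imports Defs
begin


lemma cs_rho: "cartan_scheme A rho C \<Longrightarrow> b \<in> A \<Longrightarrow> rho i b \<in> A \<and> rho i (rho i b) = b"
  unfolding cartan_scheme_def by blast
lemma cs_C: "cartan_scheme A rho C \<Longrightarrow> b \<in> A \<Longrightarrow> C (rho i b) i j = C b i j"
  unfolding cartan_scheme_def by metis
lemma cs_zero: "cartan_scheme A rho C \<Longrightarrow> b \<in> A \<Longrightarrow> C b i j = 0 \<longleftrightarrow> C b j i = 0"
  unfolding cartan_scheme_def by blast
lemma cs_two: "cartan_scheme A rho C \<Longrightarrow> b \<in> A \<Longrightarrow> C b i i = 2"
  unfolding cartan_scheme_def by blast

lemma root_simple: "b \<in> A \<Longrightarrow> simple_root j \<in> real_roots A rho C b"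
proof -
  assume b: "b \<in> A"
  have "weyl_mor A rho C b b id" using b by (rule weyl_mor.mor_id)
  then show ?thesis unfolding real_roots_def by (metis (mono_tags, lifting) id_apply mem_Collect_eq)
qed

lemma root_sigma: "v \<in> real_roots A rho C b \<Longrightarrow> sigma C b i v \<in> real_roots A rho C (rho i b)"
proof -
  assume "v \<in> real_roots A rho C b"
  then obtain b' f j where "v = f (simple_root j)" "weyl_mor A rho C b' b f"
    unfolding real_roots_def by blast
  from this(2) have "weyl_mor A rho C b' (rho i b) (sigma C b i \<circ> f)" by (rule weyl_mor.mor_step)
  moreover have "sigma C b i v = (sigma C b i \<circ> f) (simple_root j)" using \<open>v = _\<close> by simp
  ultimately show ?thesis unfolding real_roots_def by blast
qed

lemma no_mixed:
  assumes "finite_root_system A rho C" "b \<in> A" "v \<in> real_roots A rho C b"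
    "v p > 0" "v q < 0"
  shows False
proof -
  have "v \<in> pos_real_roots A rho C b \<union> uminus ` pos_real_roots A rho C b"
    using assms unfolding finite_root_system_def by blast
  then show False using assms(4,5) unfolding pos_real_roots_def
    by (auto, smt (verit), smt (verit))
qed

lemma sum2: "j \<noteq> k \<Longrightarrow> (\<Sum>l\<in>(UNIV::'i::finite set). f l * (if l = k then x else if l = j then y else 0)) = f k * x + f j * (y::int)"
proof -
  assume jk: "j \<noteq> k"
  have "(\<lambda>l. f l * (if l = k then x else if l = j then y else 0)) =
        (\<lambda>l. (if l = k then f k * x else 0) + (if l = j then f j * y else 0))"
    using jk by auto
  then have "(\<Sum>l\<in>(UNIV::'i set). f l * (if l = k then x else if l = j then y else 0)) =
     (\<Sum>l\<in>(UNIV::'i set). (if l = k then f k * x else 0)) + (\<Sum>l\<in>(UNIV::'i set). (if l = j then f j * y else 0))"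
    by (simp only: sum.distrib)
  then show ?thesis by simp
qed

lemma sum3: "distinct [i,j,k] \<Longrightarrow> (\<Sum>l\<in>(UNIV::'i::finite set). f l * (if l = i then x else if l = j then y else if l = k then z else 0)) = f i * x + f j * y + f k * (z::int)"
proof -
  assume d: "distinct [i,j,k]"
  have "(\<lambda>l. f l * (if l = i then x else if l = j then y else if l = k then z else 0)) =
        (\<lambda>l. (if l = i then f i * x else 0) + (if l = j then f j * y else 0) + (if l = k then f k * z else 0))"
    using d by auto
  then have "(\<Sum>l\<in>(UNIV::'i set). f l * (if l = i then x else if l = j then y else if l = k then z else 0)) =
     (\<Sum>l\<in>(UNIV::'i set). (if l = i then f i * x else 0)) + (\<Sum>l\<in>(UNIV::'i set). (if l = j then f j * y else 0)) + (\<Sum>l\<in>(UNIV::'i set). (if l = k then f k * z else 0))"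
    by (simp only: sum.distrib)
  then show ?thesis by simp
qed

definition vec2 :: "'i \<Rightarrow> 'i \<Rightarrow> int \<Rightarrow> 'i \<Rightarrow> int" where
  "vec2 k j m = (\<lambda>l. if l = k then 1 else if l = j then m else 0)"

lemma F2a:
  assumes cs: "cartan_scheme A rho C" and b: "b \<in> A" and jk: "j \<noteq> k"
  shows "vec2 k j (- C b j k) \<in> real_roots A rho C b"
proof -
  have b': "rho j b \<in> A" "rho j (rho j b) = b" using cs_rho[OF cs b] by auto
  have "sigma C (rho j b) j (simple_root k) \<in> real_roots A rho C b"
    using root_sigma[OF root_simple[where rho=rho and C=C and j=k, OF b'(1)], of j] b'(2) by simp
  moreover have "sigma C (rho j b) j (simple_root k) = vec2 k j (- C b j k)"
  proof -
    have s: "(\<Sum>m\<in>UNIV. C (rho j b) j m * simple_root k m) = C b j k"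
      using cs_C[OF cs b] by (simp add: simple_root_def if_distrib cong: if_cong)
    show ?thesis unfolding sigma_def s using jk by (auto simp: vec2_def simple_root_def)
  qed
  ultimately show ?thesis by simp
qed

lemma F2b:
  assumes cs: "cartan_scheme A rho C" and fr: "finite_root_system A rho C"
    and b: "b \<in> A" and jk: "j \<noteq> k" and v: "vec2 k j m \<in> real_roots A rho C b"
  shows "m \<le> - C b j k"
proof (rule ccontr)
  assume c: "\<not> m \<le> - C b j k"
  have r: "sigma C b j (vec2 k j m) \<in> real_roots A rho C (rho j b)"
    by (rule root_sigma[OF v])
  have s: "(\<Sum>l\<in>UNIV. C b j l * vec2 k j m l) = C b j k + 2 * m"
    unfolding vec2_def sum2[OF jk] using cs_two[OF cs b] by simp
  have p: "sigma C b j (vec2 k j m) k > 0" unfolding sigma_def s using jk by (simp add: vec2_def)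
  have q: "sigma C b j (vec2 k j m) j < 0" unfolding sigma_def s using jk c by (simp add: vec2_def)
  show False using no_mixed[OF fr _ r p q] cs_rho[OF cs b] by blast
qed

lemma P2a:
  assumes cs: "cartan_scheme A rho C" and fr: "finite_root_system A rho C"
    and b: "b \<in> A" and d: "distinct [i,j,k]" and z: "C b i j = 0" "C b i k = 0"
  shows "- C b j k \<le> - C (rho i b) j k"
proof -
  have jk: "j \<noteq> k" using d by simp
  have v: "vec2 k j (- C b j k) \<in> real_roots A rho C b" by (rule F2a[OF cs b jk])
  have e: "(\<Sum>l\<in>UNIV. C b i l * vec2 k j (- C b j k) l) = 0"
    unfolding vec2_def sum2[OF jk] using z by simp
  have "sigma C b i (vec2 k j (- C b j k)) = vec2 k j (- C b j k)"
    unfolding sigma_def e by simp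
  then have "vec2 k j (- C b j k) \<in> real_roots A rho C (rho i b)"
    using root_sigma[OF v, of i] by simp
  then show ?thesis using F2b[OF cs fr _ jk] cs_rho[OF cs b] by blast
qed

lemma P2:
  assumes cs: "cartan_scheme A rho C" and fr: "finite_root_system A rho C"
    and b: "b \<in> A" and d: "distinct [i,j,k]" and z: "C b i j = 0" "C b i k = 0"
  shows "C b j k = C (rho i b) j k"
proof -
  have b': "rho i b \<in> A" "rho i (rho i b) = b" using cs_rho[OF cs b] by auto
  have z': "C (rho i b) i j = 0" "C (rho i b) i k = 0" using z cs_C[OF cs b] by auto
  show ?thesis using P2a[OF cs fr b d z] P2a[OF cs fr b'(1) d z'] b'(2) by simp
qed

lemma L:
  assumes cs: "cartan_scheme A rho C" and fr: "finite_root_system A rho C"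
    and b: "b \<in> A" and d: "distinct [i,j,k]" and z: "C b i k = 0" "C b k j = 0"
  shows "C (rho i b) k j = 0"
proof (rule ccontr)
  assume c: "C (rho i b) k j \<noteq> 0"
  define b' where "b' = rho i b"
  have b': "b' \<in> A" "rho i b' = b" using cs_rho[OF cs b] b'_def by auto
  have kj: "k \<noteq> j" using d by auto
  define n where "n = - C b' k j"
  have n: "n \<ge> 1" using c cs b' unfolding n_def b'_def cartan_scheme_def
    by (metis b'_def d distinct_length_2_or_more int_one_le_iff_zero_less linorder_not_le neg_0_less_iff_less order_le_less)
  have w: "vec2 j k n \<in> real_roots A rho C b'" unfolding n_def by (rule F2a[OF cs b'(1) kj])
  have z': "C b' i k = 0" using z cs_C[OF cs b] b'_def by auto
  define s where "s = C b' i j"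
  have ij: "i \<noteq> j" "i \<noteq> k" using d by auto
  have "(\<Sum>l\<in>UNIV. C b' i l * vec2 j k n l) = s"
    unfolding vec2_def sum2[OF kj] using z' s_def by simp
  then have veq: "sigma C b' i (vec2 j k n) = (\<lambda>l. if l = i then - s else if l = j then 1 else if l = k then n else 0)"
    unfolding sigma_def using ij kj by (auto simp: vec2_def)
  define v where "v = (\<lambda>l. if l = i then - s else if l = j then 1 else if l = k then n else (0::int))"
  have vr: "v \<in> real_roots A rho C b" using root_sigma[OF w, of i] veq b'(2) v_def by simp
  have zki: "C b k i = 0" using z cs_zero[OF cs b] by blast
  have d2: "distinct [i,k,j]" using d by auto
  have e: "(\<Sum>l\<in>UNIV. C b k l * v l) = 2 * n"
  proof -
    have "v = (\<lambda>l. if l = i then - s else if l = k then n else if l = j then 1 else 0)"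
      unfolding v_def using kj by auto
    then show ?thesis using sum3[OF d2, of "C b k" "-s" n 1] zki z cs_two[OF cs b] by simp
  qed
  have "sigma C b k v = (\<lambda>l. v l - (if l = k then 2 * n else 0))" unfolding sigma_def e by simp
  then have p: "sigma C b k v j > 0" and q: "sigma C b k v k < 0"
    using kj ij n unfolding v_def by auto
  show False using no_mixed[OF fr _ root_sigma[OF vr] p q] cs_rho[OF cs b] by blast
qed


lemma conn_step:
  assumes cs: "cartan_scheme A rho C" and fr: "finite_root_system A rho C"
    and b: "b \<in> A" and iS: "i \<in> S" and con: "subdiagram_connected C b S"
  shows "subdiagram_connected C (rho i b) S"
proof -
  define E where "E c = {(u, v). u \<in> S \<and> v \<in> S \<and> dynkin_edge C c u v}" for c
  have b': "rho i b \<in> A" "rho i (rho i b) = b" using cs_rho[OF cs b] by auto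
  have Ci: "\<And>x. C (rho i b) i x = C b i x" using cs_C[OF cs b] by blast
  have "E b \<subseteq> (E (rho i b))\<^sup>*"
  proof
    fix p assume "p \<in> E b"
    then obtain u v where p: "p = (u, v)" "u \<in> S" "v \<in> S" "u \<noteq> v" "C b u v \<noteq> 0"
      unfolding E_def dynkin_edge_def by auto
    show "p \<in> (E (rho i b))\<^sup>*"
    proof (cases "u = i \<or> v = i")
      case True
      then have "C (rho i b) u v \<noteq> 0"
        using p(5) Ci cs_zero[OF cs b] cs_zero[OF cs b'(1)] by metis
      then show ?thesis using p unfolding E_def dynkin_edge_def by auto
    next
      case False
      show ?thesis
      proof (cases "C b i u \<noteq> 0 \<and> C b i v \<noteq> 0")
        case True
        then have "(u, i) \<in> E (rho i b)" "(i, v) \<in> E (rho i b)"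
          using p False iS Ci cs_zero[OF cs b'(1)] unfolding E_def dynkin_edge_def by auto
        then show ?thesis using p(1) by auto
      next
        case F2: False
        have "C (rho i b) u v \<noteq> 0"
        proof (cases "C b i v = 0")
          case True
          have d: "distinct [i,u,v]" using False p by auto
          have "C (rho i b) v u = 0 \<Longrightarrow> C b v u = 0"
            using L[OF cs fr b'(1) d] True Ci b'(2) by metis
          then show ?thesis using p(5) cs_zero[OF cs b] cs_zero[OF cs b'(1)] by metis
        next
          case False2: False
          then have T: "C b i u = 0" using F2 by auto
          have d: "distinct [i,v,u]" using False p by auto
          have "C (rho i b) u v = 0 \<Longrightarrow> C b u v = 0"
            using L[OF cs fr b'(1) d] T Ci b'(2) by metis
          then show ?thesis using p(5) by metis
        qed
        then show ?thesis using p unfolding E_def dynkin_edge_def by auto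
      qed
    qed
  qed
  then have "(E b)\<^sup>* \<subseteq> (E (rho i b))\<^sup>*" by (rule rtrancl_subset_rtrancl)
  then show ?thesis using con unfolding subdiagram_connected_def E_def by blast
qed

theorem lemma3p7:
  fixes A :: "'a set" and rho :: "'i::finite \<Rightarrow> 'a \<Rightarrow> 'a"
    and C :: "'a \<Rightarrow> 'i \<Rightarrow> 'i \<Rightarrow> int" and a :: 'a and i :: 'i
  assumes "cartan_scheme A rho C"
    and "ws_connected A rho C"
    and "ws_simply_connected A rho C"
    and "finite_root_system A rho C"
    and "a \<in> A"
  shows "(\<forall>is :: 'i list.
            subdiagram_connected C a (insert i (set is)) \<longleftrightarrow>
            subdiagram_connected C (rho i a) (insert i (set is)))
       \<and> (\<forall>j k. distinct [i, j, k] \<longrightarrow>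
            \<not> dynkin_edge C a i j \<and> \<not> dynkin_edge C a i k \<longrightarrow>
            C a j k = C (rho i a) j k \<and> C a k j = C (rho i a) k j)
       \<and> (\<forall>j k. distinct [i, j, k] \<longrightarrow>
            dynkin_edge C a i j \<and> \<not> dynkin_edge C a i k \<longrightarrow>
            (dynkin_edge C a j k \<longleftrightarrow> dynkin_edge C (rho i a) j k))"
proof (intro conjI allI impI)
  note cs = assms(1) and fr = assms(4) and a = assms(5)
  have a': "rho i a \<in> A" "rho i (rho i a) = a" using cs_rho[OF cs a] by auto
  fix "is" :: "'i list"
  show "subdiagram_connected C a (insert i (set is)) \<longleftrightarrow>
            subdiagram_connected C (rho i a) (insert i (set is))"
    using conn_step[OF cs fr a, of i] conn_step[OF cs fr a'(1), of i] a'(2) by auto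
next
  note cs = assms(1) and fr = assms(4) and a = assms(5)
  fix j k assume d: "distinct [i, j, k]" and e: "\<not> dynkin_edge C a i j \<and> \<not> dynkin_edge C a i k"
  then have z: "C a i j = 0" "C a i k = 0" unfolding dynkin_edge_def by auto
  have d2: "distinct [i,k,j]" using d by auto
  show "C a j k = C (rho i a) j k" by (rule P2[OF cs fr a d z])
  show "C a k j = C (rho i a) k j" by (rule P2[OF cs fr a d2 z(2) z(1)])
next
  note cs = assms(1) and fr = assms(4) and a = assms(5)
  have a': "rho i a \<in> A" "rho i (rho i a) = a" using cs_rho[OF cs a] by auto
  fix j k assume d: "distinct [i, j, k]" and e: "dynkin_edge C a i j \<and> \<not> dynkin_edge C a i k"
  then have z: "C a i k = 0" unfolding dynkin_edge_def by auto
  have z': "C (rho i a) i k = 0" using z cs_C[OF cs a] by metis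
  have 1: "C a k j = 0 \<Longrightarrow> C (rho i a) k j = 0" using L[OF cs fr a d z] by blast
  have 2: "C (rho i a) k j = 0 \<Longrightarrow> C a k j = 0" using L[OF cs fr a'(1) d z'] a'(2) by metis
  have "C a j k = 0 \<longleftrightarrow> C (rho i a) j k = 0"
    using 1 2 cs_zero[OF cs a] cs_zero[OF cs a'(1)] by metis
  then show "dynkin_edge C a j k \<longleftrightarrow> dynkin_edge C (rho i a) j k"
    unfolding dynkin_edge_def by auto
qed

end
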